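(* Let $\mathbf i$ and $\mathbf i'$ be reduced expressions of $w_0$ related by a braid move at positions $k,k+1,k+2$ (i.e. $i_k=i_{k+2}=p$, $i_{k+1}=q$, $i'_k=i'_{k+2}=q$, $i'_{k+1}=p$, $i'_j=i_j$ otherwise, with $p\cdot q=-1$), and assume the standard seed $\mathcal S^{\mathbf i}$ satisfies properties (A), (B), (C). Define $P'_j:=P_{\mathbf s(j)}$ for $j\ne k$, where $\mathbf s$ is the transposition of $k+1$ and $k+2$, and $P'_k:=\tilde P_k/(\beta_{k+1}P_k)$ with $\tilde P_k:=\beta_kP_{\mathrm{in}(k)}$. Then for every $1\le j\le N$, $$P'_jP'_{j_-(\mathbf i')}=\beta'_j\prod_{\substack{l<j<l_+(\mathbf i')\\ i'_l\cdot i'_j=-1}}P'_l,$$ with $P'_0:=1$.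
   Context: $\mathfrak g$ is a complex simple Lie algebra of simply-laced type, vertex set $I=\{1,\dots,n\}$, Cartan entries $i\cdot j$, Weyl group with simple reflections $s_i$, longest element $w_0$, $N=\ell(w_0)$, fundamental weights $\omega_i$. $\overline D:\mathbb C[\mathsf N]\to\mathbb C(\alpha_1,\dots,\alpha_n)$ is the algebra morphism $\overline D(f)=\sum_{\mathbf j}(f,e_{j_1}\cdots e_{j_r})\big(\alpha_{j_1}(\alpha_{j_1}+\alpha_{j_2})\cdots(\alpha_{j_1}+\dots+\alpha_{j_r})\big)^{-1}$ ($\mathbb C[\mathsf N]$ identified with the graded dual of $U(\mathfrak n)$, $e_i$ Chevalley generators, $\alpha_i$ indeterminates). Positive roots are linear forms in the $\alpha_i$; $(\beta;P)$ = multiplicity of $\beta$ in $P$. For a reduced expression $\mathbf i$: $\beta_j=s_{i_1}\cdots s_{i_{j-1}}(\alpha_{i_j})$ (and $\beta'_j$ likewise for $\mathbf i'$); $j_-(\mathbf i)=\max(\{l<j:i_l=i_j\}\cup\{0\})$; $j_+(\mathbf i)=\min(\{l>j:i_l=i_j\}\cup\{N+1\})$; $J_{ex}(\mathbf i)=\{j:j_+\le N\}$; flag minors $x_j=D(s_{i_1}\cdots s_{i_j}\omega_{i_j},\omega_{i_j})$. The quiver $Q^{\mathbf i}$ on $\{1,\dots,N\}$ has an ordinary arrow $u\to v$ iff $i_u\cdot i_v=-1$ and $u<v<u_+<v_+$, and a horizontal arrow $u_+\to u$ for $u\in J_{ex}$; $P_{\mathrm{in}(j)}:=P_{j_+}\prod_{l\in\mathrm{inord}(j)}P_l$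 with $\mathrm{inord}(j)$ the sources of ordinary arrows into $j$. Properties: (A) $\overline D(x_j)=1/P_j$ with $P_j$ a product of positive roots; (B) $P_jP_{j_-}=\beta_j\prod_{l<j<l_+,\,i_l\cdot i_j=-1}P_l$ for all $j$, $P_0=1$; (C) $(\beta_i;P_j)-(\beta_i;P_{j_+})\le1$ for $j\in J_{ex}$, $1\le i\le N$. *)

theory Defs
  imports Complex_Main "HOL-Library.Multiset"
begin

text \<open>Simply-laced Cartan data on the vertex set I = {1..n}. C i j is i.j.
  Elements of the root lattice (linear forms in alpha_1..alpha_n with integer
  coefficients) are coefficient vectors nat => int.\<close>

type_synonym rvec = "nat \<Rightarrow> int"

definition simply_laced_simple :: "nat \<Rightarrow> (nat \<Rightarrow> nat \<Rightarrow> int) \<Rightarrow> bool" where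
  "simply_laced_simple n C \<longleftrightarrow>
     n \<ge> 1 \<and>
     (\<forall>i\<in>{1..n}. C i i = 2) \<and>
     (\<forall>i\<in>{1..n}. \<forall>j\<in>{1..n}. C i j = C j i) \<and>
     (\<forall>i\<in>{1..n}. \<forall>j\<in>{1..n}. i \<noteq> j \<longrightarrow> C i j \<in> {0, -1}) \<and>
     (\<forall>i\<in>{1..n}. \<forall>j\<in>{1..n}.
        (\<lambda>a b. a \<in> {1..n} \<and> b \<in> {1..n} \<and> C a b = -1)\<^sup>*\<^sup>* i j) \<and>
     (\<forall>x :: nat \<Rightarrow> real. (\<exists>i\<in>{1..n}. x i \<noteq> 0) \<longrightarrow>
        (\<Sum>i\<in>{1..n}. \<Sum>j\<in>{1..n}. of_int (C i j) * x i * x j) > 0)"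

definition simple_root :: "nat \<Rightarrow> rvec" where
  "simple_root i = (\<lambda>j. if j = i then 1 else 0)"

definition sref :: "nat \<Rightarrow> (nat \<Rightarrow> nat \<Rightarrow> int) \<Rightarrow> nat \<Rightarrow> rvec \<Rightarrow> rvec" where
  "sref n C i \<gamma> = (\<lambda>j. \<gamma> j - (if j = i then (\<Sum>l\<in>{1..n}. C i l * \<gamma> l) else 0))"

primrec wprod :: "nat \<Rightarrow> (nat \<Rightarrow> nat \<Rightarrow> int) \<Rightarrow> nat list \<Rightarrow> rvec \<Rightarrow> rvec" where
  "wprod n C [] = id"
| "wprod n C (a # w) = sref n C a \<circ> wprod n C w"

definition weyl :: "nat \<Rightarrow> (nat \<Rightarrow> nat \<Rightarrow> int) \<Rightarrow> (rvec \<Rightarrow> rvec) set" where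
  "weyl n C = {wprod n C w | w. w \<in> lists {1..n}}"

definition pos_roots :: "nat \<Rightarrow> (nat \<Rightarrow> nat \<Rightarrow> int) \<Rightarrow> rvec set" where
  "pos_roots n C = {\<gamma>. (\<exists>w\<in>lists {1..n}. \<exists>i\<in>{1..n}. \<gamma> = wprod n C w (simple_root i))
                       \<and> (\<forall>j. \<gamma> j \<ge> 0)}"

definition wlen :: "nat \<Rightarrow> (nat \<Rightarrow> nat \<Rightarrow> int) \<Rightarrow> (rvec \<Rightarrow> rvec) \<Rightarrow> nat" where
  "wlen n C f = (LEAST m. \<exists>w\<in>lists {1..n}. length w = m \<and> wprod n C w = f)"

definition w0 :: "nat \<Rightarrow> (nat \<Rightarrow> nat \<Rightarrow> int) \<Rightarrow> rvec \<Rightarrow> rvec" where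
  "w0 n C = (THE f. f \<in> weyl n C \<and>
                (\<forall>\<gamma>\<in>pos_roots n C. (\<lambda>j. - f \<gamma> j) \<in> pos_roots n C))"

definition reduced_w0 :: "nat \<Rightarrow> (nat \<Rightarrow> nat \<Rightarrow> int) \<Rightarrow> nat list \<Rightarrow> bool" where
  "reduced_w0 n C w \<longleftrightarrow> w \<in> lists {1..n} \<and> wprod n C w = w0 n C
      \<and> length w = wlen n C (w0 n C)"

definition ent :: "nat list \<Rightarrow> nat \<Rightarrow> nat" where
  "ent w j = w ! (j - 1)"

definition jminus :: "nat list \<Rightarrow> nat \<Rightarrow> nat" where
  "jminus w j = Max ({l. 1 \<le> l \<and> l < j \<and> ent w l = ent w j} \<union> {0})"

definition jplus :: "nat list \<Rightarrow> nat \<Rightarrow> nat" where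
  "jplus w j = Min ({l. j < l \<and> l \<le> length w \<and> ent w l = ent w j} \<union> {length w + 1})"

definition Jex :: "nat list \<Rightarrow> nat set" where
  "Jex w = {j. 1 \<le> j \<and> j \<le> length w \<and> jplus w j \<le> length w}"

definition beta :: "nat \<Rightarrow> (nat \<Rightarrow> nat \<Rightarrow> int) \<Rightarrow> nat list \<Rightarrow> nat \<Rightarrow> rvec" where
  "beta n C w j = wprod n C (take (j - 1) w) (simple_root (ent w j))"

text \<open>Sources of ordinary arrows u -> j of the quiver Q^i.\<close>
definition inord :: "(nat \<Rightarrow> nat \<Rightarrow> int) \<Rightarrow> nat list \<Rightarrow> nat \<Rightarrow> nat set" where
  "inord C w j = {u. 1 \<le> u \<and> u \<le> length w \<and> C (ent w u) (ent w j) = -1 \<and>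
                     u < j \<and> j < jplus w u \<and> jplus w u < jplus w j}"

definition bset :: "(nat \<Rightarrow> nat \<Rightarrow> int) \<Rightarrow> nat list \<Rightarrow> nat \<Rightarrow> nat set" where
  "bset C w j = {l. 1 \<le> l \<and> l < j \<and> j < jplus w l \<and> C (ent w l) (ent w j) = -1}"

text \<open>Evaluation of a linear form / of a product of linear forms (given as a multiset
  of its factors) at a point a = (alpha_1, ..., alpha_n) in C^n.\<close>
definition ev :: "nat \<Rightarrow> rvec \<Rightarrow> (nat \<Rightarrow> complex) \<Rightarrow> complex" where
  "ev n \<gamma> a = (\<Sum>i\<in>{1..n}. of_int (\<gamma> i) * a i)"

definition evP :: "nat \<Rightarrow> rvec multiset \<Rightarrow> (nat \<Rightarrow> complex) \<Rightarrow> complex" where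
  "evP n M a = (\<Prod>\<gamma>\<in>#M. ev n \<gamma> a)"

definition generic_pt :: "nat \<Rightarrow> (nat \<Rightarrow> nat \<Rightarrow> int) \<Rightarrow> (nat \<Rightarrow> complex) \<Rightarrow> bool" where
  "generic_pt n C a \<longleftrightarrow> (\<forall>\<gamma>\<in>pos_roots n C. ev n \<gamma> a \<noteq> 0)"

definition braid_move :: "(nat \<Rightarrow> nat \<Rightarrow> int) \<Rightarrow> nat list \<Rightarrow> nat list \<Rightarrow> nat \<Rightarrow> nat \<Rightarrow> nat \<Rightarrow> bool" where
  "braid_move C w w' k p q \<longleftrightarrow>
     length w' = length w \<and> 1 \<le> k \<and> k + 2 \<le> length w \<and> C p q = -1 \<and>
     ent w k = p \<and> ent w (k+1) = q \<and> ent w (k+2) = p \<and>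
     ent w' k = q \<and> ent w' (k+1) = p \<and> ent w' (k+2) = q \<and>
     (\<forall>j\<in>{1..length w}. j \<notin> {k, k+1, k+2} \<longrightarrow> ent w' j = ent w j)"

text \<open>Properties (A) (products of positive roots part), (B), (C) of the seed data P
  (P j = multiset of positive-root factors of P_j).\<close>
definition propA :: "nat \<Rightarrow> (nat \<Rightarrow> nat \<Rightarrow> int) \<Rightarrow> nat list \<Rightarrow> (nat \<Rightarrow> rvec multiset) \<Rightarrow> bool" where
  "propA n C w P \<longleftrightarrow> P 0 = {#} \<and>
     (\<forall>j\<in>{1..length w}. set_mset (P j) \<subseteq> pos_roots n C)"

definition propB :: "nat \<Rightarrow> (nat \<Rightarrow> nat \<Rightarrow> int) \<Rightarrow> nat list \<Rightarrow> (nat \<Rightarrow> rvec multiset) \<Rightarrow> bool" where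
  "propB n C w P \<longleftrightarrow> (\<forall>j\<in>{1..length w}. \<forall>a.
     evP n (P j) a * evP n (P (jminus w j)) a =
     ev n (beta n C w j) a * (\<Prod>l\<in>bset C w j. evP n (P l) a))"

definition propC :: "nat \<Rightarrow> (nat \<Rightarrow> nat \<Rightarrow> int) \<Rightarrow> nat list \<Rightarrow> (nat \<Rightarrow> rvec multiset) \<Rightarrow> bool" where
  "propC n C w P \<longleftrightarrow> (\<forall>j\<in>Jex w. \<forall>i\<in>{1..length w}.
     int (count (P j) (beta n C w i)) - int (count (P (jplus w j)) (beta n C w i)) \<le> 1)"

definition Pin :: "nat \<Rightarrow> (nat \<Rightarrow> nat \<Rightarrow> int) \<Rightarrow> nat list \<Rightarrow> (nat \<Rightarrow> rvec multiset) \<Rightarrow> nat \<Rightarrow> (nat \<Rightarrow> complex) \<Rightarrow> complex" where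
  "Pin n C w P j a = evP n (P (jplus w j)) a * (\<Prod>l\<in>inord C w j. evP n (P l) a)"

definition Pnew :: "nat \<Rightarrow> (nat \<Rightarrow> nat \<Rightarrow> int) \<Rightarrow> nat list \<Rightarrow> (nat \<Rightarrow> rvec multiset) \<Rightarrow> nat \<Rightarrow> nat \<Rightarrow> (nat \<Rightarrow> complex) \<Rightarrow> complex" where
  "Pnew n C w P k j a =
     (if j = 0 then 1
      else if j = k then
        (ev n (beta n C w k) a * Pin n C w P k a) / (ev n (beta n C w (k+1)) a * evP n (P k) a)
      else evP n (P (if j = k+1 then k+2 else if j = k+2 then k+1 else j)) a)"

end

theory Submission
  imports Defs
begin


lemma wprod_append: "wprod n C (xs @ ys) = wprod n C xs \<circ> wprod n C ys"
  by (induction xs) auto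

definition lastset :: "nat list \<Rightarrow> nat \<Rightarrow> nat set" where
  "lastset w j = {l. 1 \<le> l \<and> l < j \<and> ent w l = ent w j \<and> (\<forall>t. l < t \<and> t < j \<longrightarrow> ent w t \<noteq> ent w j)}"

lemma lastset_jminus: "lastset w j = (if jminus w j = 0 then {} else {jminus w j})"
proof -
  define S where "S = {l. 1 \<le> l \<and> l < j \<and> ent w l = ent w j}"
  have fS: "finite S" unfolding S_def by (rule finite_subset[of _ "{..<j}"]) auto
  have jm: "jminus w j = Max (S \<union> {0})" unfolding jminus_def S_def by simp
  show ?thesis
  proof (cases "S = {}")
    case True
    then have "jminus w j = 0" using jm by simp
    moreover have "lastset w j = {}" using True unfolding lastset_def S_def by auto
    ultimately show ?thesis by simp
  next
    case False
    define m where "m = Max S"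
    have mS: "m \<in> S" using fS False m_def by simp
    have mge: "\<And>l. l \<in> S \<Longrightarrow> l \<le> m" using fS m_def by simp
    have "Max (S \<union> {0}) = m"
      by (rule Max_eqI) (use fS mS mge in auto)
    then have "jminus w j = m" using jm by simp
    moreover have "m \<noteq> 0" using mS unfolding S_def by auto
    moreover have "lastset w j = {m}"
    proof
      show "lastset w j \<subseteq> {m}"
      proof
        fix l assume l: "l \<in> lastset w j"
        then have "l \<in> S" unfolding lastset_def S_def by auto
        then have "l \<le> m" using mge by auto
        moreover have "\<not> l < m" using l mS unfolding lastset_def S_def by auto
        ultimately show "l \<in> {m}" by auto
      qed
      have "\<forall>t. m < t \<and> t < j \<longrightarrow> ent w t \<noteq> ent w j"
      proof (intro allI impI)
        fix t assume "m < t \<and> t < j"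
        then show "ent w t \<noteq> ent w j" using mge[of t] mS unfolding S_def by auto
      qed
      then show "{m} \<subseteq> lastset w j"
        using mS unfolding lastset_def S_def by auto
    qed
    ultimately show ?thesis by simp
  qed
qed

lemma jplus_gt_iff:
  assumes "j \<le> length w"
  shows "(j < jplus w l) \<longleftrightarrow> (\<forall>t. l < t \<and> t \<le> j \<longrightarrow> ent w t \<noteq> ent w l)"
proof -
  define S where "S = {t. l < t \<and> t \<le> length w \<and> ent w t = ent w l}"
  have fS: "finite (S \<union> {length w + 1})" unfolding S_def by (rule finite_subset[of _ "{..length w + 1}"]) auto
  have "jplus w l = Min (S \<union> {length w + 1})" unfolding jplus_def S_def by simp
  then have "(j < jplus w l) \<longleftrightarrow> (\<forall>x\<in>S \<union> {length w + 1}. j < x)"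
    using fS by simp
  also have "\<dots> \<longleftrightarrow> (\<forall>t. l < t \<and> t \<le> j \<longrightarrow> ent w t \<noteq> ent w l)"
    using assms unfolding S_def by force
  finally show ?thesis .
qed

lemma jplus_eq:
  assumes "l < m" "m \<le> length w" "ent w m = ent w l" "\<forall>t. l < t \<and> t < m \<longrightarrow> ent w t \<noteq> ent w l"
  shows "jplus w l = m"
proof -
  define S where "S = {t. l < t \<and> t \<le> length w \<and> ent w t = ent w l}"
  have fS: "finite (S \<union> {length w + 1})" unfolding S_def by (rule finite_subset[of _ "{..length w + 1}"]) auto
  have "jplus w l = Min (S \<union> {length w + 1})" unfolding jplus_def S_def by simp
  moreover have "m \<in> S \<union> {length w + 1}" using assms unfolding S_def by auto
  moreover have "\<forall>x\<in>S \<union> {length w + 1}. m \<le> x" using assms unfolding S_def by (auto simp: not_less[symmetric])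
  ultimately show ?thesis using fS by (metis Min_eqI)
qed

lemma jplus_props:
  assumes "jplus w l \<le> length w"
  shows "l < jplus w l \<and> ent w (jplus w l) = ent w l"
proof -
  define S where "S = {t. l < t \<and> t \<le> length w \<and> ent w t = ent w l}"
  have fS: "finite (S \<union> {length w + 1})" unfolding S_def by (rule finite_subset[of _ "{..length w + 1}"]) auto
  have "jplus w l = Min (S \<union> {length w + 1})" unfolding jplus_def S_def by simp
  then have "jplus w l \<in> S \<union> {length w + 1}" using fS by (metis Min_in insert_not_empty sup_bot.right_neutral Un_insert_right)
  then show ?thesis using assms unfolding S_def by auto
qed

lemma bset_iff:
  assumes "j \<le> length w"
  shows "l \<in> bset C w j \<longleftrightarrow> 1 \<le> l \<and> l < j \<and> (\<forall>t. l < t \<and> t \<le> j \<longrightarrow> ent w t \<noteq> ent w l) \<and> C (ent w l) (ent w j) = -1"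
  unfolding bset_def using jplus_gt_iff[OF assms] by auto

lemma evP_nz:
  assumes "generic_pt n C x" "set_mset M \<subseteq> pos_roots n C"
  shows "evP n M x \<noteq> 0"
  using assms unfolding evP_def generic_pt_def by auto



definition lin :: "nat \<Rightarrow> (nat \<Rightarrow> nat \<Rightarrow> int) \<Rightarrow> nat \<Rightarrow> rvec \<Rightarrow> int" where
  "lin n C i \<gamma> = (\<Sum>l\<in>{1..n}. C i l * \<gamma> l)"

lemma sref_lin: "sref n C i \<gamma> = (\<lambda>j. \<gamma> j - (if j = i then lin n C i \<gamma> else 0))"
  unfolding sref_def lin_def by simp

lemma lin_sub:
  assumes "p \<in> {1..n}"
  shows "lin n C i (\<lambda>j. \<gamma> j - (if j = p then x else 0)) = lin n C i \<gamma> - C i p * x"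
proof -
  have "lin n C i (\<lambda>j. \<gamma> j - (if j = p then x else 0)) =
        (\<Sum>l\<in>{1..n}. C i l * \<gamma> l) - (\<Sum>l\<in>{1..n}. C i l * (if l = p then x else 0))"
    unfolding lin_def by (simp add: right_diff_distrib sum_subtractf)
  also have "(\<Sum>l\<in>{1..n}. C i l * (if l = p then x else 0)) = C i p * x"
    using assms by (simp add: if_distrib[of "(*) _"] sum.delta cong: if_cong)
  finally show ?thesis unfolding lin_def by simp
qed

lemma braid_half:
  assumes "p \<in> {1..n}" "q \<in> {1..n}" "C p q = -1" "C q p = -1" "C p p = 2" "C q q = 2"
  shows "sref n C p (sref n C q (sref n C p \<gamma>)) =
     (\<lambda>j. \<gamma> j - (if j = p then lin n C p \<gamma> + lin n C q \<gamma> else 0) - (if j = q then lin n C p \<gamma> + lin n C q \<gamma> else 0))"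
proof -
  define x where "x = lin n C p \<gamma>"
  define y where "y = lin n C q \<gamma>"
  define g1 where "g1 = (\<lambda>j. \<gamma> j - (if j = p then x else 0))"
  have s1: "sref n C p \<gamma> = g1" unfolding g1_def x_def sref_lin by simp
  have l1p: "lin n C p g1 = - x" unfolding g1_def using lin_sub[OF assms(1)] assms unfolding x_def by simp
  have l1q: "lin n C q g1 = x + y" unfolding g1_def using lin_sub[OF assms(1)] assms unfolding x_def y_def by simp
  define g2 where "g2 = (\<lambda>j. g1 j - (if j = q then x + y else 0))"
  have s2: "sref n C q g1 = g2" unfolding g2_def sref_lin l1q by simp
  have l2p: "lin n C p g2 = y" unfolding g2_def using lin_sub[OF assms(2), of C p g1] assms l1p by simp
  have s3: "sref n C p g2 = (\<lambda>j. g2 j - (if j = p then y else 0))" unfolding sref_lin l2p by simp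
  show ?thesis unfolding s1 s2 s3 by (auto simp: fun_eq_iff g2_def g1_def x_def y_def)
qed

lemma braid3:
  assumes "p \<in> {1..n}" "q \<in> {1..n}" "C p q = -1" "C q p = -1" "C p p = 2" "C q q = 2"
  shows "sref n C p (sref n C q (sref n C p \<gamma>)) = sref n C q (sref n C p (sref n C q \<gamma>))"
  unfolding braid_half[OF assms] braid_half[OF assms(2,1,4,3,6,5)] by (auto simp: fun_eq_iff)

lemma lin_sr: "j \<in> {1..n} \<Longrightarrow> lin n C i (simple_root j) = C i j"
  unfolding lin_def simple_root_def by (simp add: if_distrib[of "(*) _"] sum.delta cong: if_cong)

lemma sref_sr:
  assumes "p \<in> {1..n}" "q \<in> {1..n}" "C p q = -1" "C q p = -1" "C p p = 2" "C q q = 2"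
  shows "sref n C p (simple_root q) = sref n C q (simple_root p)"
    and "sref n C p (sref n C q (simple_root p)) = simple_root q"
proof -
  have pq: "p \<noteq> q" using assms by auto
  have a: "sref n C p (simple_root q) = (\<lambda>t. simple_root q t - (if t = p then -1 else 0))"
    unfolding sref_lin lin_sr[OF assms(2)] assms(3) by simp
  have b: "sref n C q (simple_root p) = (\<lambda>t. simple_root p t - (if t = q then -1 else 0))"
    unfolding sref_lin lin_sr[OF assms(1)] assms(4) by simp
  show "sref n C p (simple_root q) = sref n C q (simple_root p)"
    unfolding a b using pq by (auto simp: fun_eq_iff simple_root_def)
  have "lin n C p (\<lambda>t. simple_root p t - (if t = q then -1 else 0)) = 1"
    using lin_sub[OF assms(2), of C p "simple_root p" "-1"] lin_sr[OF assms(1)] assms by simp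
  then show "sref n C p (sref n C q (simple_root p)) = simple_root q"
    unfolding b by (subst sref_lin) (use pq in \<open>auto simp: fun_eq_iff simple_root_def\<close>)
qed



locale bm =
  fixes n :: nat and C :: "nat \<Rightarrow> nat \<Rightarrow> int" and u v :: "nat list" and p q k :: nat
  assumes pn: "p \<in> {1..n}" and qn: "q \<in> {1..n}" and Cpq: "C p q = -1" and Cqp: "C q p = -1"
    and Cpp: "C p p = 2" and Cqq: "C q q = 2" and Cdiag: "\<forall>x\<in>set u \<union> set v. C x x = 2"
    and lu: "length u = k - 1" and k1: "1 \<le> k"
begin

abbreviation "w \<equiv> u @ p # q # p # v"
abbreviation "w' \<equiv> u @ q # p # q # v"
definition "s j = (if j = k+1 then k+2 else if j = k+2 then k+1 else j)"

lemma pq: "p \<noteq> q" using Cpq Cpp by auto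

lemma len: "length w' = length w" "k + 2 \<le> length w" using lu k1 by auto

lemma entw: "ent w k = p" "ent w (k+1) = q" "ent w (k+2) = p"
  using lu k1 unfolding ent_def by (auto simp: nth_append)
lemma entw': "ent w' k = q" "ent w' (k+1) = p" "ent w' (k+2) = q"
  using lu k1 unfolding ent_def by (auto simp: nth_append)

lemma ent_eq: "1 \<le> t \<Longrightarrow> t \<noteq> k \<Longrightarrow> t \<noteq> k+1 \<Longrightarrow> t \<noteq> k+2 \<Longrightarrow> ent w' t = ent w t"
  using lu k1 unfolding ent_def
  by (cases "t - 1 < length u") (auto simp: nth_append)

lemma ent': "1 \<le> t \<Longrightarrow> ent w' t = (if t = k then q else if t = k+1 then p else if t = k+2 then q else ent w t)"
  using ent_eq entw' by auto

lemma diag: "1 \<le> l \<Longrightarrow> l \<le> length w \<Longrightarrow> C (ent w l) (ent w l) = 2"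
proof -
  assume l: "1 \<le> l" "l \<le> length w"
  have "ent w l \<in> set w" unfolding ent_def using l by (intro nth_mem) auto
  then show ?thesis using Cdiag Cpp Cqq by auto
qed

lemma entwS: "ent w (Suc k) = q" "ent w (Suc (Suc k)) = p" using entw by auto
lemma entw'S: "ent w' (Suc k) = p" "ent w' (Suc (Suc k)) = q" using entw' by auto

lemma I1: "j \<le> k \<Longrightarrow> ent w' ` {l<..<j} = ent w ` {l<..<j}"
  apply (rule image_cong, simp) apply (rule ent_eq) by auto
lemma I2: "Suc (Suc k) \<le> l \<Longrightarrow> ent w' ` {l<..<j} = ent w ` {l<..<j}"
  apply (rule image_cong, simp) apply (rule ent_eq) by auto
lemma I3: assumes "l < k" "Suc (Suc k) < j" shows "ent w' ` {l<..<j} = ent w ` {l<..<j}"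
proof -
  have e: "{l<..<j} = {l<..<k} \<union> {k, Suc k, Suc (Suc k)} \<union> {Suc (Suc k)<..<j}" using assms by auto
  show ?thesis unfolding e image_Un using I1[of k l] I2[of "Suc (Suc k)" j] entw entw' by auto
qed

lemma ivS: "l < j \<Longrightarrow> {l<..<Suc j} = insert j {l<..<j}" by auto
lemma ivL: "Suc l < j \<Longrightarrow> {l<..<j} = insert (Suc l) {Suc l<..<j}" by auto

lemma noimg: "(\<forall>t. l < t \<and> t < j \<longrightarrow> f t \<noteq> x) \<longleftrightarrow> x \<notin> f ` {l<..<j}" by auto
lemma noimg2: "(\<forall>t. l < t \<and> t \<le> j \<longrightarrow> f t \<noteq> x) \<longleftrightarrow> x \<notin> f ` {l<..<Suc j}"
  by (auto simp: less_Suc_eq_le)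

lemma lastset_img: "lastset ww j = {l. 1 \<le> l \<and> l < j \<and> ent ww l = ent ww j \<and> ent ww j \<notin> ent ww ` {l<..<j}}"
  unfolding lastset_def noimg ..

lemma bset_img: "j \<le> length ww \<Longrightarrow> l \<in> bset C ww j \<longleftrightarrow> 1 \<le> l \<and> l < j \<and> ent ww l \<notin> ent ww ` {l<..<Suc j} \<and> C (ent ww l) (ent ww j) = -1"
  by (subst bset_iff) (simp_all add: noimg2)

lemma s_inv: "s (s j) = j" unfolding s_def by auto

lemma s_img: "(\<And>l. l \<in> B \<longleftrightarrow> s l \<in> A) \<Longrightarrow> B = s ` A"
  by (metis (no_types, lifting) image_iff s_inv subsetI subset_antisym)

definition "X = {l. 1 \<le> l \<and> l < k \<and> C (ent w l) p = -1 \<and> ent w l \<noteq> q \<and> ent w l \<notin> ent w ` {l<..<k}}"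
definition "Y = {l. 1 \<le> l \<and> l < k \<and> C (ent w l) q = -1 \<and> ent w l \<noteq> p \<and> ent w l \<notin> ent w ` {l<..<k}}"

lemmas basics = entw entw' entwS entw'S pq pq[symmetric] Cpq Cqp Cpp Cqq

lemma L1: "lastset w' k = lastset w (Suc k)"
proof (rule set_eqI)
  fix l
  show "l \<in> lastset w' k \<longleftrightarrow> l \<in> lastset w (Suc k)"
  proof (cases "l < k")
    case True
    then show ?thesis unfolding lastset_img using I1[of k l] ivS[OF True] ent_eq[of l] basics by auto
  next
    case False
    then have "l = k \<or> k < l" by auto
    then show ?thesis unfolding lastset_img using basics by (auto simp: less_Suc_eq)
  qed
qed

lemma L2: "lastset w' (Suc k) = lastset w k"
proof (rule set_eqI)
  fix l
  show "l \<in> lastset w' (Suc k) \<longleftrightarrow> l \<in> lastset w k"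
  proof (cases "l < k")
    case True
    then show ?thesis unfolding lastset_img using I1[of k l] ivS[OF True] ent_eq[of l] basics by auto
  next
    case False
    then have "l = k \<or> k < l" by auto
    then show ?thesis unfolding lastset_img using basics by (auto simp: less_Suc_eq)
  qed
qed

lemma L3: "lastset w (Suc (Suc k)) = {k}" "lastset w' (Suc (Suc k)) = {k}"
proof -
  have e: "{k<..<Suc (Suc k)} = {Suc k}" by auto
  have c: "l < k \<or> l = k \<or> l = Suc k \<or> Suc (Suc k) \<le> l" for l by auto
  show "lastset w (Suc (Suc k)) = {k}"
  proof (rule set_eqI)
    fix l show "l \<in> lastset w (Suc (Suc k)) \<longleftrightarrow> l \<in> {k}"
    proof -
      consider "l < k" | "l = k" | "l = Suc k" | "Suc (Suc k) \<le> l" using c by blast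
      then show ?thesis
      proof cases
        case 1
        have "p \<in> ent w ` {l<..<Suc (Suc k)}" using entw 1 by (intro image_eqI[of _ _ k]) auto
        then show ?thesis unfolding lastset_img using 1 entwS by auto
      next
        case 2 then show ?thesis unfolding lastset_img using e entw entwS pq k1 by simp
      next
        case 3 then show ?thesis unfolding lastset_img using entwS pq by simp
      qed (simp add: lastset_img)
    qed
  qed
  show "lastset w' (Suc (Suc k)) = {k}"
  proof (rule set_eqI)
    fix l show "l \<in> lastset w' (Suc (Suc k)) \<longleftrightarrow> l \<in> {k}"
    proof -
      consider "l < k" | "l = k" | "l = Suc k" | "Suc (Suc k) \<le> l" using c by blast
      then show ?thesis
      proof cases
        case 1
        have "q \<in> ent w' ` {l<..<Suc (Suc k)}" using entw' 1 by (intro image_eqI[of _ _ k]) auto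
        then show ?thesis unfolding lastset_img using 1 entw'S by auto
      next
        case 2 then show ?thesis unfolding lastset_img using e entw' entw'S pq k1 by simp
      next
        case 3 then show ?thesis unfolding lastset_img using entw'S pq by simp
      qed (simp add: lastset_img)
    qed
  qed
qed

lemma lenS: "Suc (Suc k) \<le> length w" "Suc (Suc k) \<le> length w'" "Suc k \<le> length w" "Suc k \<le> length w'"
  "k \<le> length w" "k \<le> length w'"
  using len by auto

lemma cases5: obtains "l < k" | "l = k" | "l = Suc k" | "l = Suc (Suc k)" | "Suc (Suc k) < l"
  by fastforce

lemma img_k: "l < k \<Longrightarrow> ent ww ` {l<..<Suc k} = insert (ent ww k) (ent ww ` {l<..<k})"
  by (simp add: ivS)
lemma img_k1: "l < k \<Longrightarrow> ent ww ` {l<..<Suc (Suc k)} = insert (ent ww (Suc k)) (insert (ent ww k) (ent ww ` {l<..<k}))"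
  by (simp add: ivS)
lemma img_k2: "l < k \<Longrightarrow> ent ww ` {l<..<Suc (Suc (Suc k))} = insert (ent ww (Suc (Suc k))) (insert (ent ww (Suc k)) (insert (ent ww k) (ent ww ` {l<..<k})))"
  by (simp add: ivS)
lemma ent_lt: "1 \<le> l \<Longrightarrow> l < k \<Longrightarrow> ent w' l = ent w l" by (rule ent_eq) auto

lemma L4: "bset C w k = X \<union> lastset w (Suc k)"
proof (rule set_eqI)
  fix l show "l \<in> bset C w k \<longleftrightarrow> l \<in> X \<union> lastset w (Suc k)"
  proof (cases l rule: cases5)
    case 1 then show ?thesis
      by (simp add: bset_img[OF lenS(5)] lastset_img X_def img_k basics) (cases "ent w l = q"; cases "ent w l = p"; auto simp: basics)
  next
    case 2 then show ?thesis by (simp add: bset_img[OF lenS(5)] lastset_img X_def basics)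
  qed (simp_all add: bset_img[OF lenS(5)] lastset_img X_def)
qed

lemma L5: "bset C w (Suc k) = insert k Y"
proof (rule set_eqI)
  fix l show "l \<in> bset C w (Suc k) \<longleftrightarrow> l \<in> insert k Y"
  proof (cases l rule: cases5)
    case 1 then show ?thesis
      by (simp add: bset_img[OF lenS(3)] Y_def img_k1 basics) (auto simp: basics)
  next
    case 2 
    have e: "{k<..<Suc (Suc k)} = {Suc k}" by auto
    show ?thesis using 2 k1 by (simp add: bset_img[OF lenS(3)] Y_def e basics)
  qed (simp_all add: bset_img[OF lenS(3)] Y_def)
qed

lemma L6: "bset C w (Suc (Suc k)) = insert (Suc k) X"
proof (rule set_eqI)
  fix l show "l \<in> bset C w (Suc (Suc k)) \<longleftrightarrow> l \<in> insert (Suc k) X"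
  proof (cases l rule: cases5)
    case 1 then show ?thesis
      by (simp add: bset_img[OF lenS(1)] X_def img_k2 basics) (auto simp: basics)
  next
    case 2 
    have e: "{k<..<Suc (Suc (Suc k))} = {Suc k, Suc (Suc k)}" by auto
    show ?thesis using 2 k1 by (simp add: bset_img[OF lenS(1)] X_def e basics)
  next
    case 3
    have e: "{Suc k<..<Suc (Suc (Suc k))} = {Suc (Suc k)}" by auto
    show ?thesis using 3 k1 by (simp add: bset_img[OF lenS(1)] X_def e basics)
  qed (simp_all add: bset_img[OF lenS(1)] X_def)
qed

lemma L7: "bset C w' k = lastset w k \<union> Y"
proof (rule set_eqI)
  fix l show "l \<in> bset C w' k \<longleftrightarrow> l \<in> lastset w k \<union> Y"
  proof (cases l rule: cases5)
    case 1 then show ?thesis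
      by (simp add: bset_img[OF lenS(6)] lastset_img Y_def img_k I1 ent_lt basics) (auto simp: basics ent_lt)
  qed (simp_all add: bset_img[OF lenS(6)] lastset_img Y_def)
qed

lemma L8: "bset C w' (Suc k) = insert k X"
proof (rule set_eqI)
  fix l show "l \<in> bset C w' (Suc k) \<longleftrightarrow> l \<in> insert k X"
  proof (cases l rule: cases5)
    case 1 then show ?thesis
      by (simp add: bset_img[OF lenS(4)] X_def img_k1 I1 ent_lt basics) (auto simp: basics ent_lt)
  next
    case 2 
    have e: "{k<..<Suc (Suc k)} = {Suc k}" by auto
    show ?thesis using 2 k1 by (simp add: bset_img[OF lenS(4)] X_def e basics)
  qed (simp_all add: bset_img[OF lenS(4)] X_def)
qed

lemma L9: "bset C w' (Suc (Suc k)) = insert (Suc k) Y"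
proof (rule set_eqI)
  fix l show "l \<in> bset C w' (Suc (Suc k)) \<longleftrightarrow> l \<in> insert (Suc k) Y"
  proof (cases l rule: cases5)
    case 1 then show ?thesis
      by (simp add: bset_img[OF lenS(2)] Y_def img_k2 I1 ent_lt basics) (auto simp: basics ent_lt)
  next
    case 2 
    have e: "{k<..<Suc (Suc (Suc k))} = {Suc k, Suc (Suc k)}" by auto
    show ?thesis using 2 k1 by (simp add: bset_img[OF lenS(2)] Y_def e basics)
  next
    case 3
    have e: "{Suc k<..<Suc (Suc (Suc k))} = {Suc (Suc k)}" by auto
    show ?thesis using 3 k1 by (simp add: bset_img[OF lenS(2)] Y_def e basics)
  qed (simp_all add: bset_img[OF lenS(2)] Y_def)
qed

lemma jplus_k: "jplus w k = Suc (Suc k)"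
proof (rule jplus_eq)
  show "\<forall>t. k < t \<and> t < Suc (Suc k) \<longrightarrow> ent w t \<noteq> ent w k"
  proof (intro allI impI)
    fix t assume "k < t \<and> t < Suc (Suc k)"
    then have "t = Suc k" by auto
    then show "ent w t \<noteq> ent w k" using basics by simp
  qed
qed (use lenS basics in auto)

lemma inord_k: "inord C w k = lastset w (Suc k)"
proof (rule set_eqI)
  fix x show "x \<in> inord C w k \<longleftrightarrow> x \<in> lastset w (Suc k)"
  proof
    assume x: "x \<in> inord C w k"
    then have x1: "1 \<le> x" "x < k" "k < jplus w x" "jplus w x < Suc (Suc k)"
      unfolding inord_def jplus_k by auto
    then have jx: "jplus w x = Suc k" by auto
    then have ex: "ent w x = q" using jplus_props[of w x] lenS basics by auto
    have "\<forall>t. x < t \<and> t \<le> k \<longrightarrow> ent w t \<noteq> ent w x"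
      using jplus_gt_iff[OF lenS(5), of x] x1 by auto
    then show "x \<in> lastset w (Suc k)" unfolding lastset_def using x1 ex basics
      by (auto simp: less_Suc_eq_le)
  next
    assume x: "x \<in> lastset w (Suc k)"
    then have x1: "1 \<le> x" "x < Suc k" "ent w x = q" "\<forall>t. x < t \<and> t < Suc k \<longrightarrow> ent w t \<noteq> q"
      unfolding lastset_def using basics by auto
    then have xk: "x < k" using basics by (metis less_SucE)
    have jx: "jplus w x = Suc k"
      by (rule jplus_eq) (use x1 lenS basics in auto)
    show "x \<in> inord C w k" unfolding inord_def using x1 xk jx lenS basics by (simp add: jplus_k)
  qed
qed

lemma s_simps: "l < k \<Longrightarrow> s l = l" "s k = k" "s (Suc k) = Suc (Suc k)" "s (Suc (Suc k)) = Suc k"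
  "Suc (Suc k) < l \<Longrightarrow> s l = l"
  unfolding s_def by auto

lemma ent_gt: "Suc (Suc k) < l \<Longrightarrow> ent w' l = ent w l" by (rule ent_eq) auto

lemma G_low:
  assumes j: "1 \<le> j" "j < k"
  shows "l \<in> lastset w' j \<longleftrightarrow> s l \<in> lastset w j"
    and "k \<notin> lastset w j"
    and "l \<in> bset C w' j \<longleftrightarrow> s l \<in> bset C w j"
    and "k \<notin> bset C w j"
proof -
  have jl: "j \<le> length w" "j \<le> length w'" using j lenS by auto
  have ej: "ent w' j = ent w j" using j ent_lt by auto
  show "k \<notin> lastset w j" "k \<notin> bset C w j" using j bset_img[OF jl(1)] unfolding lastset_def by auto
  show "l \<in> lastset w' j \<longleftrightarrow> s l \<in> lastset w j"
  proof (cases "l < k")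
    case True
    show ?thesis
    proof (cases "l = 0")
      case False
      then show ?thesis using True j I1[of j l] ej ent_lt[of l] s_simps(1)[OF True]
        unfolding lastset_img by auto
    qed (simp add: lastset_img s_def)
  next
    case False
    then have "j < s l" using j unfolding s_def by auto
    then show ?thesis using False j unfolding lastset_img by auto
  qed
  show "l \<in> bset C w' j \<longleftrightarrow> s l \<in> bset C w j"
  proof (cases "l < k")
    case True
    show ?thesis
    proof (cases "l = 0")
      case False
      have "Suc j \<le> k" using j by auto
      then show ?thesis using True j I1[of "Suc j" l] ej ent_lt[of l] s_simps(1)[OF True] False
        unfolding bset_img[OF jl(1)] bset_img[OF jl(2)] by auto
    qed (simp add: bset_img[OF jl(1)] bset_img[OF jl(2)] s_def)
  next
    case False
    then have "j < s l" using j unfolding s_def by auto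
    then show ?thesis using False j unfolding bset_img[OF jl(1)] bset_img[OF jl(2)] by auto
  qed
qed

lemma G_high:
  assumes j: "Suc (Suc k) < j" "j \<le> length w"
  shows "l \<in> lastset w' j \<longleftrightarrow> s l \<in> lastset w j"
    and "k \<notin> lastset w j"
    and "l \<in> bset C w' j \<longleftrightarrow> s l \<in> bset C w j"
    and "k \<notin> bset C w j"
proof -
  have jl: "j \<le> length w" "j \<le> length w'" using j by auto
  have ej: "ent w' j = ent w j" using j ent_gt by auto
  have pin: "p \<in> ent w ` {k<..<j}" "p \<in> ent w ` {k<..<Suc j}"
    using j basics by (auto intro!: image_eqI[of _ _ "Suc (Suc k)"])
  have qin: "q \<in> ent w' ` {k<..<j}" "q \<in> ent w' ` {k<..<Suc j}"
    using j basics by (auto intro!: image_eqI[of _ _ "Suc (Suc k)"])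
  show "k \<notin> lastset w j" using pin basics unfolding lastset_img by auto
  show "k \<notin> bset C w j" using pin basics unfolding bset_img[OF jl(1)] by auto
  have i1: "ent w' ` {Suc k<..<J} = insert q (ent w ` {Suc (Suc k)<..<J})" if "Suc (Suc k) < J" for J
    using ivL[of "Suc k" J] that I2[of "Suc (Suc k)" J] basics by simp
  have i2: "ent w ` {Suc k<..<J} = insert p (ent w ` {Suc (Suc k)<..<J})" if "Suc (Suc k) < J" for J
    using ivL[of "Suc k" J] that basics by simp
  have i3: "ent w' ` {Suc (Suc k)<..<J} = ent w ` {Suc (Suc k)<..<J}" for J
    using I2 by simp
  show "l \<in> lastset w' j \<longleftrightarrow> s l \<in> lastset w j"
  proof (cases l rule: cases5)
    case 1
    show ?thesis
    proof (cases "l = 0")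
      case False
      then show ?thesis using 1 j I3[of l j] ej ent_lt[of l] s_simps(1)[OF 1]
        unfolding lastset_img by auto
    qed (simp add: lastset_img s_def)
  next
    case 2 then show ?thesis using pin qin basics ej s_simps unfolding lastset_img by auto
  next
    case 3 then show ?thesis using j i1[of j] i2[of j] basics ej s_simps unfolding lastset_img by auto
  next
    case 4 then show ?thesis using j i3[of j] i2[of j] basics ej s_simps unfolding lastset_img by auto
  next
    case 5 then show ?thesis using j I2[of l j] ej ent_gt[of l] s_simps(5)[OF 5] unfolding lastset_img by auto
  qed
  show "l \<in> bset C w' j \<longleftrightarrow> s l \<in> bset C w j"
  proof (cases l rule: cases5)
    case 1
    show ?thesis
    proof (cases "l = 0")
      case False
      have "Suc (Suc k) < Suc j" using j by auto
      then show ?thesis using 1 j I3[of l "Suc j"] ej ent_lt[of l] s_simps(1)[OF 1] False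
        unfolding bset_img[OF jl(1)] bset_img[OF jl(2)] by auto
    qed (simp add: bset_img[OF jl(1)] bset_img[OF jl(2)] s_def)
  next
    case 2 then show ?thesis using pin qin basics ej s_simps unfolding bset_img[OF jl(1)] bset_img[OF jl(2)] by auto
  next
    case 3 then show ?thesis using j i1[of "Suc j"] i2[of "Suc j"] basics ej s_simps
      unfolding bset_img[OF jl(1)] bset_img[OF jl(2)] by auto
  next
    case 4 then show ?thesis using j i3[of "Suc j"] i2[of "Suc j"] basics ej s_simps
      unfolding bset_img[OF jl(1)] bset_img[OF jl(2)] by auto
  next
    case 5 then show ?thesis using j I2[of l "Suc j"] ej ent_gt[of l] s_simps(5)[OF 5]
      unfolding bset_img[OF jl(1)] bset_img[OF jl(2)] by auto
  qed
qed

lemma jminus_from_lastset: "lastset ww j = {m} \<Longrightarrow> jminus ww j = m"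
  using lastset_jminus[of ww j] by (auto split: if_splits)

end


context bm
begin

lemma beta_rel:
  "beta n C w' k = beta n C w (Suc (Suc k))"
  "beta n C w' (Suc k) = beta n C w (Suc k)"
  "beta n C w' (Suc (Suc k)) = beta n C w k"
  "1 \<le> j \<Longrightarrow> j < k \<Longrightarrow> beta n C w' j = beta n C w j"
  "Suc (Suc k) < j \<Longrightarrow> beta n C w' j = beta n C w j"
proof -
  have k: "k - 1 = length u" "k = Suc (length u)" using lu k1 by auto
  note sr = sref_sr[OF pn qn Cpq Cqp Cpp Cqq]
  note sr2 = sref_sr[OF qn pn Cqp Cpq Cqq Cpp]
  show "beta n C w' k = beta n C w (Suc (Suc k))"
    unfolding beta_def using entw' entwS sr(2) by (simp add: k wprod_append)
  show "beta n C w' (Suc k) = beta n C w (Suc k)"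
    unfolding beta_def using entw'S entwS sr(1) by (simp add: k wprod_append)
  show "beta n C w' (Suc (Suc k)) = beta n C w k"
    unfolding beta_def using entw entw'S sr2(2) by (simp add: k wprod_append)
  show "1 \<le> j \<Longrightarrow> j < k \<Longrightarrow> beta n C w' j = beta n C w j"
    unfolding beta_def using ent_lt[of j] by (simp add: k)
  assume j: "Suc (Suc k) < j"
  have t: "take (j - 1) ww = take (length u) ww @ take (j - 1 - length u) (drop (length u) ww)" for ww :: "nat list"
  proof -
    have "j - 1 = length u + (j - 1 - length u)" using j k by auto
    then show ?thesis by (metis take_add)
  qed
  have b3: "wprod n C [p, q, p] = wprod n C [q, p, q]"
    using braid3[OF pn qn Cpq Cqp Cpp Cqq] by (auto simp: fun_eq_iff)
  have d: "j - 1 - length u = Suc (Suc (Suc (j - 1 - length u - 3)))" using j k by auto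
  have "take (j - 1) w = u @ [p, q, p] @ take (j - 1 - length u - 3) v"
    by (subst t, subst d) simp
  moreover have "take (j - 1) w' = u @ [q, p, q] @ take (j - 1 - length u - 3) v"
    by (subst t, subst d) simp
  ultimately show "beta n C w' j = beta n C w j"
    unfolding beta_def using ent_gt[OF j] b3 by (simp only: wprod_append)
qed


lemma prod_lastset: "f 0 = 1 \<Longrightarrow> (\<Prod>l\<in>lastset ww j. f l) = f (jminus ww j)"
  using lastset_jminus[of ww j] by auto

lemma jminus_lt: "jminus ww j = 0 \<or> (1 \<le> jminus ww j \<and> jminus ww j < j)"
  using lastset_jminus[of ww j] unfolding lastset_def by (auto split: if_splits)

lemma Xlt: "l \<in> X \<Longrightarrow> 1 \<le> l \<and> l < k" unfolding X_def by auto
lemma Ylt: "l \<in> Y \<Longrightarrow> 1 \<le> l \<and> l < k" unfolding Y_def by auto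
lemma Llt: "l \<in> lastset ww j \<Longrightarrow> 1 \<le> l \<and> l < j" unfolding lastset_def by auto

lemma finX: "finite X" "finite Y" "finite (lastset ww j)" "finite (bset C ww j)"
proof -
  show "finite X" by (rule finite_subset[of _ "{..<k}"]) (auto dest: Xlt)
  show "finite Y" by (rule finite_subset[of _ "{..<k}"]) (auto dest: Ylt)
  show "finite (lastset ww j)" by (rule finite_subset[of _ "{..<j}"]) (auto dest: Llt)
  show "finite (bset C ww j)" by (rule finite_subset[of _ "{..<j}"]) (auto simp: bset_def)
qed

lemma alg2:
  fixes a b c r bea beb bec PX :: complex
  assumes "a \<noteq> 0" "beb \<noteq> 0" "c = bec * b * PX / a"
  shows "(bea * (c * r) / (beb * a)) * r = bec * ((bea * PX * r / a) * (b * r / (beb * a)))"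
  using assms by (simp add: field_simps)
lemma alg3:
  fixes a b c r bea beb bec PX :: complex
  assumes "a \<noteq> 0" "beb \<noteq> 0"
  shows "c * (bea * PX * r / a) = beb * ((bea * (c * r) / (beb * a)) * PX)"
  using assms by (simp add: field_simps)
lemma alg4:
  fixes a b c r bea beb bec PX :: complex
  assumes "a \<noteq> 0" "beb \<noteq> 0"
  shows "b * (bea * (c * r) / (beb * a)) = bea * (c * (b * r / (beb * a)))"
  using assms by (simp add: field_simps)

lemma inj_s: "inj s" by (metis s_inv injI)

lemma s_k: "s l = k \<longleftrightarrow> l = k" unfolding s_def by auto

theorem main:
  assumes A: "propA n C w P" and B: "propB n C w P" and g: "generic_pt n C x"
    and j: "1 \<le> j" "j \<le> length w"
  shows "Pnew n C w P k j x * Pnew n C w P k (jminus w' j) x =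
         ev n (beta n C w' j) x * (\<Prod>l\<in>bset C w' j. Pnew n C w P k l x)"
proof -
  define E where "E l = evP n (P l) x" for l
  define PN where "PN l = Pnew n C w P k l x" for l
  define be where "be l = ev n (beta n C w l) x" for l
  have E0: "E 0 = 1" using A unfolding propA_def E_def evP_def by simp
  have Enz: "E l \<noteq> 0" if "l \<le> length w" for l
  proof (cases "l = 0")
    case True then show ?thesis using E0 by simp
  next
    case False then show ?thesis using A that g evP_nz unfolding propA_def E_def by auto
  qed
  have Bj: "E l * E (jminus w l) = be l * (\<Prod>t\<in>bset C w l. E t)" if "1 \<le> l" "l \<le> length w" for l
    using B that unfolding propB_def E_def be_def by auto
  have PN0: "PN 0 = 1" unfolding PN_def Pnew_def by simp
  have PNs: "PN l = E (s l)" if "l \<noteq> k" for l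
    using that k1 E0[unfolded E_def] unfolding PN_def Pnew_def E_def s_def by auto
  have PNlt: "PN l = E l" if "1 \<le> l" "l < k" for l using PNs[of l] that s_simps(1)[of l] by auto
  define Er where "Er = E (jminus w (Suc k))"
  define Em where "Em = E (jminus w k)"
  define PX where "PX = (\<Prod>l\<in>X. E l)"
  define PY where "PY = (\<Prod>l\<in>Y. E l)"
  have ER: "(\<Prod>l\<in>lastset w (Suc k). E l) = Er" unfolding Er_def by (rule prod_lastset) (rule E0)
  have EM: "(\<Prod>l\<in>lastset w k. E l) = Em" unfolding Em_def by (rule prod_lastset) (rule E0)
  have Rlt: "l \<in> lastset w (Suc k) \<Longrightarrow> l < k" for l
  proof -
    assume l: "l \<in> lastset w (Suc k)"
    then have "l < Suc k" "ent w l = q" using basics unfolding lastset_def by auto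
    moreover have "l \<noteq> k" using calculation basics by auto
    ultimately show "l < k" by simp
  qed
  have PNR: "(\<Prod>l\<in>lastset w (Suc k). PN l) = Er"
    unfolding ER[symmetric] by (rule prod.cong) (auto intro!: PNlt dest: Llt Rlt)
  have PNM: "(\<Prod>l\<in>lastset w k. PN l) = Em"
    unfolding EM[symmetric] by (rule prod.cong) (auto dest: Llt intro!: PNlt)
  have PNX: "(\<Prod>l\<in>X. PN l) = PX" unfolding PX_def by (rule prod.cong) (auto dest: Xlt intro!: PNlt)
  have PNY: "(\<Prod>l\<in>Y. PN l) = PY" unfolding PY_def by (rule prod.cong) (auto dest: Ylt intro!: PNlt)
  have Ea: "E k \<noteq> 0" "E (Suc k) \<noteq> 0" "E (Suc (Suc k)) \<noteq> 0" using Enz lenS by auto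
  have Ernz: "Er \<noteq> 0" unfolding Er_def using jminus_lt[of w "Suc k"] lenS by (intro Enz) auto
  have disj1: "X \<inter> lastset w (Suc k) = {}" unfolding X_def lastset_def using basics by auto
  have B1: "E k * Em = be k * (PX * Er)"
    using Bj[of k] k1 lenS unfolding L4 Em_def[symmetric]
    by (simp add: prod.union_disjoint finX disj1 PX_def ER)
  have kY: "k \<notin> Y" using Ylt by auto
  have B2: "E (Suc k) * Er = be (Suc k) * (E k * PY)"
    using Bj[of "Suc k"] lenS unfolding L5 Er_def[symmetric]
    by (simp add: finX kY PY_def)
  have kX: "Suc k \<notin> X" using Xlt by fastforce
  have jm3: "jminus w (Suc (Suc k)) = k" "jminus w' (Suc (Suc k)) = k" using L3 jminus_from_lastset by auto
  have B3: "E (Suc (Suc k)) * E k = be (Suc (Suc k)) * (E (Suc k) * PX)"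
    using Bj[of "Suc (Suc k)"] lenS unfolding L6 jm3
    by (simp add: finX kX PX_def)
  have bbnz: "be (Suc k) \<noteq> 0" using B2 Ea Ernz by auto
  have inR: "(\<Prod>l\<in>inord C w k. E l) = Er" unfolding inord_k ER ..
  have PNk: "PN k = be k * (E (Suc (Suc k)) * Er) / (be (Suc k) * E k)"
    unfolding PN_def Pnew_def Pin_def be_def[symmetric] E_def[symmetric] jplus_k inR using k1 by simp
  have Em_eq: "Em = be k * PX * Er / E k" using B1 Ea by (simp add: field_simps)
  have Ec_eq: "E (Suc (Suc k)) = be (Suc (Suc k)) * E (Suc k) * PX / E k" using B3 Ea by (simp add: field_simps)
  have PY_eq: "PY = E (Suc k) * Er / (be (Suc k) * E k)" using B2 Ea bbnz by (simp add: field_simps)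
  consider "j < k" | "j = k" | "j = Suc k" | "j = Suc (Suc k)" | "Suc (Suc k) < j" by (cases j rule: cases5) auto
  then have "PN j * PN (jminus w' j) = ev n (beta n C w' j) x * (\<Prod>l\<in>bset C w' j. PN l)"
  proof cases
    case 1
    have jm: "PN (jminus w' j) = E (jminus w j)"
    proof -
      have "PN (jminus w' j) = (\<Prod>l\<in>lastset w' j. PN l)" using prod_lastset[of PN] PN0 by simp
      also have "lastset w' j = s ` lastset w j" by (rule s_img) (rule G_low(1)[OF j(1) 1])
      also have "(\<Prod>l\<in>s ` lastset w j. PN l) = (\<Prod>l\<in>lastset w j. PN (s l))"
        by (simp add: prod.reindex[OF inj_on_subset[OF inj_s subset_UNIV]])
      also have "\<dots> = (\<Prod>l\<in>lastset w j. E l)"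
        proof (intro prod.cong refl)
          fix l assume "l \<in> lastset w j"
          then have "l \<noteq> k" using G_low(2)[OF j(1) 1] by auto
          then have "s l \<noteq> k" using s_k by simp
          then show "PN (s l) = E l" using PNs[of "s l"] s_inv by simp
        qed
      also have "\<dots> = E (jminus w j)" using prod_lastset[of E] E0 by simp
      finally show ?thesis .
    qed
    have bs: "(\<Prod>l\<in>bset C w' j. PN l) = (\<Prod>l\<in>bset C w j. E l)"
    proof -
      have "bset C w' j = s ` bset C w j" by (rule s_img) (rule G_low(3)[OF j(1) 1])
      then have "(\<Prod>l\<in>bset C w' j. PN l) = (\<Prod>l\<in>bset C w j. PN (s l))"
        by (simp add: prod.reindex[OF inj_on_subset[OF inj_s subset_UNIV]])
      also have "\<dots> = (\<Prod>l\<in>bset C w j. E l)"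
        proof (intro prod.cong refl)
          fix l assume "l \<in> bset C w j"
          then have "l \<noteq> k" using G_low(4)[OF j(1) 1] by auto
          then have "s l \<noteq> k" using s_k by simp
          then show "PN (s l) = E l" using PNs[of "s l"] s_inv by simp
        qed
      finally show ?thesis .
    qed
    show ?thesis unfolding jm bs using Bj[OF j] PNlt[OF j(1) 1] beta_rel(4)[OF j(1) 1] unfolding be_def by simp
  next
    case 5
    have jm: "PN (jminus w' j) = E (jminus w j)"
    proof -
      have "PN (jminus w' j) = (\<Prod>l\<in>lastset w' j. PN l)" using prod_lastset[of PN] PN0 by simp
      also have "lastset w' j = s ` lastset w j" by (rule s_img) (rule G_high(1)[OF 5 j(2)])
      also have "(\<Prod>l\<in>s ` lastset w j. PN l) = (\<Prod>l\<in>lastset w j. PN (s l))"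
        by (simp add: prod.reindex[OF inj_on_subset[OF inj_s subset_UNIV]])
      also have "\<dots> = (\<Prod>l\<in>lastset w j. E l)"
        proof (intro prod.cong refl)
          fix l assume "l \<in> lastset w j"
          then have "l \<noteq> k" using G_high(2)[OF 5 j(2)] by auto
          then have "s l \<noteq> k" using s_k by simp
          then show "PN (s l) = E l" using PNs[of "s l"] s_inv by simp
        qed
      also have "\<dots> = E (jminus w j)" using prod_lastset[of E] E0 by simp
      finally show ?thesis .
    qed
    have bs: "(\<Prod>l\<in>bset C w' j. PN l) = (\<Prod>l\<in>bset C w j. E l)"
    proof -
      have "bset C w' j = s ` bset C w j" by (rule s_img) (rule G_high(3)[OF 5 j(2)])
      then have "(\<Prod>l\<in>bset C w' j. PN l) = (\<Prod>l\<in>bset C w j. PN (s l))"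
        by (simp add: prod.reindex[OF inj_on_subset[OF inj_s subset_UNIV]])
      also have "\<dots> = (\<Prod>l\<in>bset C w j. E l)"
        proof (intro prod.cong refl)
          fix l assume "l \<in> bset C w j"
          then have "l \<noteq> k" using G_high(4)[OF 5 j(2)] by auto
          then have "s l \<noteq> k" using s_k by simp
          then show "PN (s l) = E l" using PNs[of "s l"] s_inv by simp
        qed
      finally show ?thesis .
    qed
    have "PN j = E j" using PNs[of j] s_simps(5)[OF 5] 5 by auto
    then show ?thesis unfolding jm bs using Bj[OF j] beta_rel(5)[OF 5] unfolding be_def by simp
  next
    case 2
    have jm: "PN (jminus w' k) = Er"
      using prod_lastset[of PN w' k] PN0 PNR unfolding L1 by simp
    have disj: "lastset w k \<inter> Y = {}" unfolding Y_def lastset_def using basics by auto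
    have bs: "(\<Prod>l\<in>bset C w' k. PN l) = Em * PY"
      unfolding L7 by (simp add: prod.union_disjoint finX disj PNM PNY)
    show ?thesis unfolding 2 jm bs beta_rel(1) be_def[symmetric] PNk Em_eq PY_eq
      by (rule alg2[OF Ea(1) bbnz Ec_eq])
  next
    case 3
    have jm: "PN (jminus w' (Suc k)) = Em"
      using prod_lastset[of PN w' "Suc k"] PN0 PNM unfolding L2 by simp
    have bs: "(\<Prod>l\<in>bset C w' (Suc k). PN l) = PN k * PX"
    proof -
      have "k \<notin> X" using Xlt by auto
      then show ?thesis unfolding L8 by (simp add: finX PNX)
    qed
    have pj: "PN (Suc k) = E (Suc (Suc k))" using PNs[of "Suc k"] s_simps by simp
    show ?thesis unfolding 3 jm bs pj beta_rel(2) be_def[symmetric] PNk Em_eq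
      by (rule alg3[OF Ea(1) bbnz])
  next
    case 4
    have bs: "(\<Prod>l\<in>bset C w' (Suc (Suc k)). PN l) = E (Suc (Suc k)) * PY"
    proof -
      have "Suc k \<notin> Y" using Ylt by fastforce
      then show ?thesis unfolding L9 using PNs[of "Suc k"] s_simps by (simp add: finX PNY)
    qed
    have pj: "PN (Suc (Suc k)) = E (Suc k)" using PNs[of "Suc (Suc k)"] s_simps by simp
    show ?thesis unfolding 4 jm3 bs pj beta_rel(3) be_def[symmetric] PNk PY_eq
      by (rule alg4[OF Ea(1) bbnz])
  qed
  then show ?thesis unfolding PN_def .
qed

end

lemma decomp3:
  assumes "1 \<le> k" "k + 2 \<le> length z"
  shows "z = take (k - 1) z @ z ! (k - 1) # z ! k # z ! (k + 1) # drop (k + 2) z"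
proof -
  have a: "drop (k - 1) z = z ! (k - 1) # drop k z"
    using Cons_nth_drop_Suc[of "k - 1" z] assms by simp
  have b: "drop k z = z ! k # drop (k + 1) z"
    using Cons_nth_drop_Suc[of k z] assms by simp
  have c: "drop (k + 1) z = z ! (k + 1) # drop (k + 2) z"
    using Cons_nth_drop_Suc[of "k + 1" z] assms by simp
  show ?thesis using append_take_drop_id[of "k - 1" z] unfolding a b c by simp
qed

theorem proposition6p8:
  fixes n :: nat and C :: "nat \<Rightarrow> nat \<Rightarrow> int" and w w' :: "nat list"
    and k p q :: nat and P :: "nat \<Rightarrow> (nat \<Rightarrow> int) multiset"
  assumes "simply_laced_simple n C"
    and "reduced_w0 n C w" and "reduced_w0 n C w'"
    and "braid_move C w w' k p q"
    and "propA n C w P" and "propB n C w P" and "propC n C w P"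
  shows "\<forall>j\<in>{1..length w'}. \<forall>a. generic_pt n C a \<longrightarrow>
           Pnew n C w P k j a * Pnew n C w P k (jminus w' j) a =
           ev n (beta n C w' j) a * (\<Prod>l\<in>bset C w' j. Pnew n C w P k l a)"
proof -
  have sl: "\<forall>i\<in>{1..n}. C i i = 2" "\<forall>i\<in>{1..n}. \<forall>j\<in>{1..n}. C i j = C j i"
    using assms(1) unfolding simply_laced_simple_def by auto
  have wl: "set w \<subseteq> {1..n}" using assms(2) unfolding reduced_w0_def by auto
  have bm: "length w' = length w" "1 \<le> k" "k + 2 \<le> length w" "C p q = -1"
     "ent w k = p" "ent w (k+1) = q" "ent w (k+2) = p"
     "ent w' k = q" "ent w' (k+1) = p" "ent w' (k+2) = q"
     "\<forall>j\<in>{1..length w}. j \<notin> {k, k+1, k+2} \<longrightarrow> ent w' j = ent w j"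
    using assms(4) unfolding braid_move_def by auto
  define u where "u = take (k - 1) w"
  define v where "v = drop (k + 2) w"
  have wn: "w ! (k - 1) = p" "w ! k = q" "w ! (k + 1) = p" using bm(5,6,7) unfolding ent_def by auto
  have wn': "w' ! (k - 1) = q" "w' ! k = p" "w' ! (k + 1) = q" using bm(8,9,10) unfolding ent_def by auto
  have weq: "w = u @ p # q # p # v" unfolding u_def v_def
    using decomp3[OF bm(2,3)] wn by simp
  have eqi: "w' ! i = w ! i" if "i < length w" "i \<noteq> k - 1" "i \<noteq> k" "i \<noteq> k + 1" for i
    using bm(11)[rule_format, of "i + 1"] that bm(2) unfolding ent_def by auto
  have tk: "take (k - 1) w' = u" unfolding u_def
    by (rule nth_equalityI) (use bm(1) eqi in auto)
  have dk: "drop (k + 2) w' = v" unfolding v_def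
    by (rule nth_equalityI) (use bm(1) eqi in auto)
  have weq': "w' = u @ q # p # q # v"
    using decomp3[OF bm(2), of w'] bm(1,3) wn' tk dk by simp
  have pq: "p \<in> {1..n}" "q \<in> {1..n}" using wl weq by auto
  interpret bm n C u v p q k
  proof
    show "C q p = -1" using sl(2) pq bm(4) by metis
    show "C p p = 2" "C q q = 2" using sl(1) pq by auto
    show "\<forall>x\<in>set u \<union> set v. C x x = 2" using sl(1) wl weq by auto
    show "length u = k - 1" unfolding u_def using bm(3) by auto
  qed (use pq bm in auto)
  show ?thesis
  proof (intro ballI allI impI)
    fix j a assume j: "j \<in> {1..length w'}" and g: "generic_pt n C a"
    show "Pnew n C w P k j a * Pnew n C w P k (jminus w' j) a =
           ev n (beta n C w' j) a * (\<Prod>l\<in>bset C w' j. Pnew n C w P k l a)"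
      unfolding weq weq' using main[OF _ _ g, of P j] assms(5,6) j bm(1) unfolding weq weq' by auto
  qed
qed

end
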